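(* Let $F_n\colon[0,+\infty)^2\to[0,+\infty)$, $n=1,2,\dots$, be functions converging uniformly on compact sets to a continuous function $F$. Then the following are equivalent: (1) for every $s,t\ge0$, $\lim_{n\to\infty}\big(F_n(s,t)-\inf_{s\le s',\,t\le t'}F_n(s',t')\big)=0$; (2) for every $D>0$, $\lim_{n\to\infty}\sup_{0\le s,t\le D}\big(F_n(s,t)-\inf_{s\le s',\,t\le t'}F_n(s',t')\big)=0$. *)

theory Defs
  imports "HOL-Analysis.Analysis"
begin

end

theory Submission
  imports Defs
begin

lemma inf_facts:
  fixes f :: "real \<times> real \<Rightarrow> real"
  assumes nn: "\<And>s t. s \<ge> 0 \<Longrightarrow> t \<ge> 0 \<Longrightarrow> f (s, t) \<ge> 0"
    and a: "0 \<le> a" "0 \<le> b"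
  shows "Inf {f (s', t') | s' t'. a \<le> s' \<and> b \<le> t'} \<le> f (a, b)"
    and "0 \<le> Inf {f (s', t') | s' t'. a \<le> s' \<and> b \<le> t'}"
    and "\<And>s t. a \<le> s \<Longrightarrow> b \<le> t \<Longrightarrow>
       Inf {f (s', t') | s' t'. a \<le> s' \<and> b \<le> t'} \<le> Inf {f (s', t') | s' t'. s \<le> s' \<and> t \<le> t'}"
proof -
  have bb: "bdd_below {f (s', t') | s' t'. a \<le> s' \<and> b \<le> t'}"
    unfolding bdd_below_def
  proof (intro exI ballI)
    fix x assume "x \<in> {f (s', t') | s' t'. a \<le> s' \<and> b \<le> t'}"
    then obtain s' t' where "a \<le> s'" "b \<le> t'" "x = f (s', t')" by blast
    then show "0 \<le> x" using nn[of s' t'] a by simp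
  qed
  show "Inf {f (s', t') | s' t'. a \<le> s' \<and> b \<le> t'} \<le> f (a, b)"
    by (rule cInf_lower[OF _ bb]) auto
  show "0 \<le> Inf {f (s', t') | s' t'. a \<le> s' \<and> b \<le> t'}"
  proof (rule cInf_greatest)
    show "{f (s', t') | s' t'. a \<le> s' \<and> b \<le> t'} \<noteq> {}" by blast
    fix x assume "x \<in> {f (s', t') | s' t'. a \<le> s' \<and> b \<le> t'}"
    then obtain s' t' where "a \<le> s'" "b \<le> t'" "x = f (s', t')" by blast
    then show "0 \<le> x" using nn[of s' t'] a by simp
  qed
  fix s t assume "a \<le> s" "b \<le> t"
  then show "Inf {f (s', t') | s' t'. a \<le> s' \<and> b \<le> t'} \<le> Inf {f (s', t') | s' t'. s \<le> s' \<and> t \<le> t'}"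
  proof (intro cInf_superset_mono[OF _ bb])
    show "{f (s', t') | s' t'. s \<le> s' \<and> t \<le> t'} \<noteq> {}" by blast
    show "{f (s', t') | s' t'. s \<le> s' \<and> t \<le> t'} \<subseteq> {f (s', t') | s' t'. a \<le> s' \<and> b \<le> t'}"
    proof
      fix x assume "x \<in> {f (s', t') | s' t'. s \<le> s' \<and> t \<le> t'}"
      then obtain s' t' where "s \<le> s'" "t \<le> t'" "x = f (s', t')" by blast
      then show "x \<in> {f (s', t') | s' t'. a \<le> s' \<and> b \<le> t'}"
        using \<open>a \<le> s\<close> \<open>b \<le> t\<close> by (intro CollectI exI[of _ s'] exI[of _ t']) simp
    qed
  qed
qed

theorem mainTheorem17:
  fixes Fs :: "nat \<Rightarrow> real \<times> real \<Rightarrow> real" and F :: "real \<times> real \<Rightarrow> real"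
  assumes nonneg: "\<And>n s t. s \<ge> 0 \<Longrightarrow> t \<ge> 0 \<Longrightarrow> Fs n (s, t) \<ge> 0"
    and unif: "\<And>K. compact K \<Longrightarrow> K \<subseteq> {0..} \<times> {0..} \<Longrightarrow> uniform_limit K Fs F sequentially"
    and cont: "continuous_on ({0..} \<times> {0..}) F"
  shows "(\<forall>s t. s \<ge> 0 \<longrightarrow> t \<ge> 0 \<longrightarrow>
            ((\<lambda>n. Fs n (s, t) - Inf {Fs n (s', t') | s' t'. s \<le> s' \<and> t \<le> t'}) \<longlonglongrightarrow> 0))
     \<longleftrightarrow>
         (\<forall>D > 0. ((\<lambda>n. Sup {Fs n (s, t) - Inf {Fs n (s', t') | s' t'. s \<le> s' \<and> t \<le> t'} | s t.
                          0 \<le> s \<and> s \<le> D \<and> 0 \<le> t \<and> t \<le> D}) \<longlonglongrightarrow> 0))"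
proof -
  define I where "I n s t = Inf {Fs n (s', t') | s' t'. s \<le> s' \<and> t \<le> t'}" for n s t
  define S where "S n D = {Fs n (s, t) - I n s t | s t. 0 \<le> s \<and> s \<le> D \<and> 0 \<le> t \<and> t \<le> D}" for n D
  have I1: "I n s t \<le> Fs n (s, t)" and I2: "0 \<le> I n s t"
    and I3: "\<And>s' t'. s \<le> s' \<Longrightarrow> t \<le> t' \<Longrightarrow> I n s t \<le> I n s' t'"
    if "0 \<le> s" "0 \<le> t" for n s t
    using inf_facts[of "Fs n" s t, OF nonneg] that unfolding I_def by auto
  have Kc: "compact ({0..D} \<times> {0..D})" for D :: real
    by (intro compact_Times compact_Icc)
  have Ksub: "{0..D} \<times> {0..D} \<subseteq> {0..} \<times> {0..}" for D :: real by auto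
  have "(\<forall>s t. s \<ge> 0 \<longrightarrow> t \<ge> 0 \<longrightarrow> ((\<lambda>n. Fs n (s, t) - I n s t) \<longlonglongrightarrow> 0))
     \<longleftrightarrow> (\<forall>D > 0. ((\<lambda>n. Sup (S n D)) \<longlonglongrightarrow> 0))"
  proof
    assume H: "\<forall>s t. s \<ge> 0 \<longrightarrow> t \<ge> 0 \<longrightarrow> ((\<lambda>n. Fs n (s, t) - I n s t) \<longlonglongrightarrow> 0)"
    show "\<forall>D > 0. ((\<lambda>n. Sup (S n D)) \<longlonglongrightarrow> 0)"
    proof (intro allI impI)
      fix D :: real assume D: "D > 0"
      let ?K = "{0..D} \<times> {0..D}"
      show "(\<lambda>n. Sup (S n D)) \<longlonglongrightarrow> 0"
        unfolding tendsto_iff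
      proof (intro allI impI)
        fix e :: real assume e: "e > 0"
        have "uniformly_continuous_on ?K F"
          by (rule compact_uniformly_continuous[OF continuous_on_subset[OF cont Ksub] Kc])
        moreover have e5: "e/5 > 0" using e by simp
        ultimately obtain d where d: "d > 0" and dF0: "\<forall>x\<in>?K. \<forall>x'\<in>?K. dist x' x < d \<longrightarrow> dist (F x') (F x) < e/5"
          unfolding uniformly_continuous_on_def by blast
        have dF: "dist (F x') (F x) < e/5" if "x \<in> ?K" "x' \<in> ?K" "dist x' x < d" for x x'
          using dF0 that by blast
        obtain N :: nat where N: "real N > 2 * D / d" using reals_Archimedean2 by blast
        have Npos: "real N > 0" using N D d by (smt (verit) divide_pos_pos)
        define \<delta> where "\<delta> = D / real N"
        have dpos: "\<delta> > 0" unfolding \<delta>_def using D Npos by simp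
        have dlt: "2 * \<delta> < d" unfolding \<delta>_def using N d Npos
          by (simp add: field_simps)
        define P where "P = (\<lambda>(i,j). (real_of_int i * \<delta>, real_of_int j * \<delta>)) ` ({0..int N} \<times> {0..int N})"
        have Pfin: "finite P" unfolding P_def by simp
        have PK: "p \<in> ?K" if "p \<in> P" for p
        proof -
          from that obtain i j where ij: "i \<in> {0..int N}" "j \<in> {0..int N}" "p = (real_of_int i * \<delta>, real_of_int j * \<delta>)"
            unfolding P_def by auto
          have "real_of_int i * \<delta> \<le> real N * \<delta>" using ij dpos by (intro mult_right_mono) auto
          moreover have "real_of_int j * \<delta> \<le> real N * \<delta>" using ij dpos by (intro mult_right_mono) auto
          moreover have "real N * \<delta> = D" unfolding \<delta>_def using Npos by simp
          ultimately show ?thesis using ij dpos by auto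
        qed
        have ev1: "\<forall>\<^sub>F n in sequentially. \<forall>p\<in>P. Fs n p - I n (fst p) (snd p) < e/5"
        proof (rule eventually_ball_finite[OF Pfin], intro ballI)
          fix p assume "p \<in> P"
          then have "fst p \<ge> 0" "snd p \<ge> 0" using PK[of p] by (auto simp: mem_Times_iff)
          then have "(\<lambda>n. Fs n (fst p, snd p) - I n (fst p) (snd p)) \<longlonglongrightarrow> 0" using H by blast
          then have "\<forall>\<^sub>F n in sequentially. dist (Fs n (fst p, snd p) - I n (fst p) (snd p)) 0 < e/5"
            by (rule tendstoD) (use e in simp)
          then show "\<forall>\<^sub>F n in sequentially. Fs n p - I n (fst p) (snd p) < e/5"
            by eventually_elim (smt (verit) dist_real_def prod.collapse)
        qed
        have ev2: "\<forall>\<^sub>F n in sequentially. \<forall>x\<in>?K. dist (Fs n x) (F x) < e/5"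
          using unif[OF Kc[of D] Ksub[of D]] e5 unfolding uniform_limit_iff by blast
        show "\<forall>\<^sub>F n in sequentially. dist (Sup (S n D)) 0 < e"
          using ev1 ev2
        proof eventually_elim
          case (elim n)
          have bound: "x \<le> 4*e/5" and low: "0 \<le> x" if "x \<in> S n D" for x
          proof -
            from that obtain s t where st: "0 \<le> s" "s \<le> D" "0 \<le> t" "t \<le> D" "x = Fs n (s,t) - I n s t"
              unfolding S_def by auto
            show "0 \<le> x" using I1[OF st(1,3)] st by simp
            define i where "i = \<lfloor>s / \<delta>\<rfloor>"
            define j where "j = \<lfloor>t / \<delta>\<rfloor>"
            have iN: "s / \<delta> \<le> real N" "t / \<delta> \<le> real N"
              using st dpos Npos unfolding \<delta>_def by (auto simp: field_simps)
            have i0: "0 \<le> i" "i \<le> int N" unfolding i_def using st dpos iN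
              by (auto simp: floor_le_iff)
            have j0: "0 \<le> j" "j \<le> int N" unfolding j_def using st dpos iN
              by (auto simp: floor_le_iff)
            define a where "a = real_of_int i * \<delta>"
            define b where "b = real_of_int j * \<delta>"
            have abP: "(a, b) \<in> P" unfolding P_def a_def b_def using i0 j0 by auto
            have as: "a \<le> s" "s < a + \<delta>"
            proof -
              have "real_of_int i \<le> s / \<delta>" "s / \<delta> < real_of_int i + 1" unfolding i_def by linarith+
              then show "a \<le> s" "s < a + \<delta>" unfolding a_def using dpos by (auto simp: field_simps)
            qed
            have bt: "b \<le> t" "t < b + \<delta>"
            proof -
              have "real_of_int j \<le> t / \<delta>" "t / \<delta> < real_of_int j + 1" unfolding j_def by linarith+
              then show "b \<le> t" "t < b + \<delta>" unfolding b_def using dpos by (auto simp: field_simps)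
            qed
            have abK: "(a,b) \<in> ?K" using PK[OF abP] .
            have stK: "(s,t) \<in> ?K" using st by auto
            have a0: "0 \<le> a" "0 \<le> b" using abK by auto
            have "dist (s,t) (a,b) \<le> \<bar>s - a\<bar> + \<bar>t - b\<bar>"
              unfolding dist_Pair_Pair dist_real_def using sqrt_sum_squares_le_sum_abs by simp
            also have "\<dots> < 2 * \<delta>" using as bt by simp
            finally have "dist (s,t) (a,b) < d" using dlt by simp
            then have f1: "dist (F (s,t)) (F (a,b)) < e/5" using dF[OF abK stK] by simp
            have f2: "dist (Fs n (s,t)) (F (s,t)) < e/5" using elim(2) stK by blast
            have f3: "dist (Fs n (a,b)) (F (a,b)) < e/5" using elim(2) abK by blast
            have f4: "Fs n (a,b) - I n a b < e/5" using bspec[OF elim(1) abP] by simp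
            have "I n a b \<le> I n s t" using I3[OF a0 as(1) bt(1)] .
            then have "x \<le> Fs n (s,t) - Fs n (a,b) + (Fs n (a,b) - I n a b)" using st by simp
            then show "x \<le> 4*e/5" using f1 f2 f3 f4 unfolding dist_real_def by linarith
          qed
          have ne: "Fs n (0,0) - I n 0 0 \<in> S n D" unfolding S_def using D
            by (intro CollectI exI[of _ 0]) simp
          have "Sup (S n D) \<le> 4*e/5" by (rule cSup_least) (use ne bound in auto)
          moreover have "0 \<le> Sup (S n D)"
          proof -
            have "bdd_above (S n D)" unfolding bdd_above_def using bound by blast
            then show ?thesis using low[OF ne] cSup_upper[OF ne] by linarith
          qed
          ultimately show ?case using e by (simp add: dist_real_def)
        qed
      qed
    qed
  next
    assume H: "\<forall>D > 0. ((\<lambda>n. Sup (S n D)) \<longlonglongrightarrow> 0)"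
    show "\<forall>s t. s \<ge> 0 \<longrightarrow> t \<ge> 0 \<longrightarrow> ((\<lambda>n. Fs n (s, t) - I n s t) \<longlonglongrightarrow> 0)"
    proof (intro allI impI)
      fix s t :: real assume s: "0 \<le> s" and t: "0 \<le> t"
      define D where "D = max s t + 1"
      have D: "D > 0" unfolding D_def using s by simp
      let ?K = "{0..D} \<times> {0..D}"
      have "compact (F ` ?K)" by (rule compact_continuous_image[OF continuous_on_subset[OF cont Ksub] Kc])
      then have "bounded (F ` ?K)" by (rule compact_imp_bounded)
      then obtain B where B0: "\<forall>y\<in>F ` ?K. norm y \<le> B"
        unfolding bounded_iff by blast
      have B: "\<bar>F x\<bar> \<le> B" if "x \<in> ?K" for x using B0 that by auto
      have ev: "\<forall>\<^sub>F n in sequentially. \<forall>x\<in>?K. dist (Fs n x) (F x) < 1"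
        using unif[OF Kc[of D] Ksub[of D]] unfolding uniform_limit_iff by (meson zero_less_one)
      have stS: "Fs n (s,t) - I n s t \<in> S n D" for n unfolding S_def D_def mem_Collect_eq
        by (rule exI[of _ s], rule exI[of _ t]) (use s t in auto)
      show "(\<lambda>n. Fs n (s, t) - I n s t) \<longlonglongrightarrow> 0"
      proof (rule tendsto_sandwich[of "\<lambda>_. 0" _ _ "\<lambda>n. Sup (S n D)"])
        show "\<forall>\<^sub>F n in sequentially. 0 \<le> Fs n (s, t) - I n s t" using I1[OF s t] by simp
        show "\<forall>\<^sub>F n in sequentially. Fs n (s, t) - I n s t \<le> Sup (S n D)"
          using ev
        proof eventually_elim
          case (elim n)
          have "bdd_above (S n D)" unfolding bdd_above_def
          proof (intro exI ballI)
            fix x assume "x \<in> S n D"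
            then obtain s' t' where st: "0 \<le> s'" "s' \<le> D" "0 \<le> t'" "t' \<le> D" "x = Fs n (s',t') - I n s' t'"
              unfolding S_def by auto
            have "(s',t') \<in> ?K" using st by auto
            then have "dist (Fs n (s',t')) (F (s',t')) < 1" "\<bar>F (s',t')\<bar> \<le> B" using elim B by auto
            then show "x \<le> B + 1" using I2[OF st(1,3), of n] st unfolding dist_real_def by linarith
          qed
          then show ?case using cSup_upper[OF stS] by blast
        qed
      qed (use H D in auto)
    qed
  qed
  then show ?thesis by (simp only: S_def I_def)
qed

end
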